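(* Let $n\ge 2$ and let $\mathbf b_1,\mathbf b_2\in\mathbb R^n_+$ be linearly independent nonnegative vectors with $\operatorname{supp}\mathbf b_1\supseteq\operatorname{supp}\mathbf b_2$. Then the matrix $A=\mathbf b_1\mathbf b_1^T+\mathbf b_2\mathbf b_2^T$ has infinitely many minimal CP factorizations.
   Context: For $\mathbf x\in\mathbb R^n$, $\operatorname{supp}\mathbf x=\{i : x_i\neq 0\}$. A symmetric $n\times n$ matrix $A$ is completely positive if $A=BB^T$ for some entrywise nonnegative $n\times k$ matrix $B$; such an equality is a CP factorization of $A$. Only CP factorizations in which the columns of $B$ are pairwise linearly independent are considered, and two CP factorizations $A=BB^T=CC^T$ are considered equal if $C=BP$ for a permutation matrix $P$. The cp-rank of $A$ is the minimal number of columns of such a nonnegative $B$; a CP factorization with that many columns is called minimal. *)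

theory Defs
  imports "HOL-Analysis.Analysis" "HOL-Library.Multiset"
begin

text \<open>A real n x k matrix B is represented by the list of its k columns
  (vectors in real^'n).  Its Gram matrix B B^T is the sum of the outer
  products of its columns.\<close>

definition outer :: "real^'n \<Rightarrow> real^'n^'n" where
  "outer b = (\<chi> i j. b $ i * b $ j)"

definition BBt :: "(real^'n) list \<Rightarrow> real^'n^'n" where
  "BBt Bs = sum_list (map outer Bs)"

definition nonneg_cols :: "(real^'n) list \<Rightarrow> bool" where
  "nonneg_cols Bs \<longleftrightarrow> (\<forall>b\<in>set Bs. \<forall>i. 0 \<le> b $ i)"

definition pairwise_lin_indep :: "(real^'n) list \<Rightarrow> bool" where
  "pairwise_lin_indep Bs \<longleftrightarrow>
     (\<forall>i j. i < length Bs \<and> j < length Bs \<and> i \<noteq> j \<longrightarrow>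
        Bs ! i \<noteq> Bs ! j \<and> independent {Bs ! i, Bs ! j})"

definition cp_factorization :: "real^'n^'n \<Rightarrow> (real^'n) list \<Rightarrow> bool" where
  "cp_factorization A Bs \<longleftrightarrow> nonneg_cols Bs \<and> pairwise_lin_indep Bs \<and> A = BBt Bs"

definition cp_rank :: "real^'n^'n \<Rightarrow> nat" where
  "cp_rank A = (LEAST k. \<exists>Bs. length Bs = k \<and> nonneg_cols Bs \<and> A = BBt Bs)"

definition minimal_cp_factorization :: "real^'n^'n \<Rightarrow> (real^'n) list \<Rightarrow> bool" where
  "minimal_cp_factorization A Bs \<longleftrightarrow> cp_factorization A Bs \<and> length Bs = cp_rank A"

text \<open>Factorizations are identified up to column permutation (C = B P),
  i.e. up to equality of the multisets of columns.\<close>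
definition minimal_cp_factorizations :: "real^'n^'n \<Rightarrow> (real^'n) multiset set" where
  "minimal_cp_factorizations A = mset ` {Bs. minimal_cp_factorization A Bs}"

end

theory Submission imports Defs begin
lemma m2: "mset [a,b] = mset [c,d] \<Longrightarrow> (a=c\<and>b=d) \<or> (a=d\<and>b=c)"
  by (auto simp: add_eq_conv_ex)
lemma p2: "u\<noteq>v \<Longrightarrow> independent {u,v} \<Longrightarrow> pairwise_lin_indep [u,v]"
  by (auto simp: pairwise_lin_indep_def less_Suc_eq insert_commute)

lemma indep2_aux:
  fixes a b :: "real^'n"
  assumes "independent {a,b}" "a\<noteq>b" "x *\<^sub>R a + y *\<^sub>R b = 0"
  shows "x=0"
proof (rule ccontr)
  assume 1: "x\<noteq>0"
  have "x *\<^sub>R a = - (y *\<^sub>R b)" using assms(3) by (simp add: eq_neg_iff_add_eq_0)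
  then have "(1/x) *\<^sub>R (x *\<^sub>R a) = (-y/x) *\<^sub>R b" by simp
  then have "a = (-y/x) *\<^sub>R b" using 1 by simp
  moreover have "(-y/x) *\<^sub>R b \<in> span {b}" by (rule span_scale) (simp add: span_base)
  ultimately have "a \<in> span {b}" by simp
  moreover have "{a,b} - {a} = {b}" using assms(2) by auto
  ultimately show False using assms(1) unfolding dependent_def by auto
qed

lemma indep2:
  fixes a b :: "real^'n"
  assumes "independent {a,b}" "a\<noteq>b" "x *\<^sub>R a + y *\<^sub>R b = 0"
  shows "x=0 \<and> y=0"
proof
  show "x = 0" using indep2_aux[OF assms] .
  have "independent {b,a}" using assms(1) by (simp add: insert_commute)
  moreover have "y *\<^sub>R b + x *\<^sub>R a = 0" using assms(3) by (simp add: add.commute)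
  ultimately show "y = 0" using indep2_aux assms(2) by metis
qed

lemma indep2I:
  fixes a b :: "real^'n"
  assumes H: "\<And>x y. x *\<^sub>R a + y *\<^sub>R b = 0 \<Longrightarrow> x=0 \<and> y=0"
  shows "a \<noteq> b \<and> independent {a,b}"
proof
  show "a \<noteq> b" using H[of 1 "-1"] by auto
  show "independent {a,b}"
  proof
    assume "dependent {a,b}"
    then obtain v where v: "v \<in> {a,b}" "v \<in> span ({a,b} - {v})" unfolding dependent_def by blast
    show False
    proof (cases "v = a")
      case True
      have "{a,b} - {a} \<subseteq> {b}" by auto
      then have "a \<in> span {b}" using v True span_mono by blast
      then obtain u where "a = u *\<^sub>R b" by (auto simp: span_singleton)
      then show False using H[of 1 "-u"] by auto
    next
      case False
      then have "v = b" using v by auto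
      have "{a,b} - {b} \<subseteq> {a}" by auto
      then have "b \<in> span {a}" using v \<open>v = b\<close> span_mono by blast
      then obtain u where "b = u *\<^sub>R a" by (auto simp: span_singleton)
      then show False using H[of "-u" 1] by auto
    qed
  qed
qed

lemma not_outer:
  fixes b1 b2 c :: "real^'n"
  assumes ind: "independent {b1,b2}" and ne: "b1 \<noteq> b2"
  shows "outer b1 + outer b2 \<noteq> outer c"
proof
  assume eq: "outer b1 + outer b2 = outer c"
  have minor: "b1$i * b2$j = b1$j * b2$i" for i j
  proof -
    have "(outer b1 + outer b2)$i$i * (outer b1 + outer b2)$j$j - ((outer b1 + outer b2)$i$j)^2
          = (b1$i * b2$j - b1$j * b2$i)^2"
      by (simp add: outer_def power2_eq_square algebra_simps)
    moreover have "(outer c)$i$i * (outer c)$j$j - ((outer c)$i$j)^2 = 0"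
      by (simp add: outer_def power2_eq_square algebra_simps)
    ultimately have "(b1$i * b2$j - b1$j * b2$i)^2 = 0" using eq by simp
    then show ?thesis by simp
  qed
  have "b1 \<noteq> 0" using ind dependent_zero by blast
  then obtain i where i: "b1$i \<noteq> 0" by (auto simp: vec_eq_iff)
  have "(b2$i) *\<^sub>R b1 + (-(b1$i)) *\<^sub>R b2 = 0"
    using minor[of i] by (auto simp: vec_eq_iff algebra_simps minor)
  then have "b2$i = 0 \<and> -(b1$i) = 0" using indep2[OF ind ne] by blast
  then show False using i by simp
qed

lemma cp_rank2:
  fixes b1 b2 :: "real^'n"
  assumes ind: "independent {b1,b2}" and ne: "b1 \<noteq> b2"
    and n1: "\<forall>i. 0 \<le> b1 $ i" and n2: "\<forall>i. 0 \<le> b2 $ i"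
  shows "cp_rank (outer b1 + outer b2) = 2"
  unfolding cp_rank_def
proof (rule Least_equality)
  show "\<exists>Bs. length Bs = 2 \<and> nonneg_cols Bs \<and> outer b1 + outer b2 = BBt Bs"
    by (rule exI[of _ "[b1,b2]"]) (auto simp: nonneg_cols_def BBt_def n1 n2)
next
  fix k assume "\<exists>Bs. length Bs = k \<and> nonneg_cols Bs \<and> outer b1 + outer b2 = BBt Bs"
  then obtain Bs where Bs: "length Bs = k" "outer b1 + outer b2 = BBt Bs" by blast
  show "2 \<le> k"
  proof (rule ccontr)
    assume "\<not> 2 \<le> k"
    then have "k = 0 \<or> k = 1" by auto
    then obtain c where "BBt Bs = outer c"
    proof
      assume "k = 0" then have "Bs = []" using Bs by simp
      then have "BBt Bs = outer 0" by (simp add: BBt_def outer_def vec_eq_iff)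
      then show ?thesis using that by blast
    next
      assume "k = 1" then obtain c where "Bs = [c]" using Bs by (metis One_nat_def length_0_conv length_Suc_conv)
      then have "BBt Bs = outer c" by (simp add: BBt_def)
      then show ?thesis using that by blast
    qed
    then show False using not_outer[OF ind ne] Bs by metis
  qed
qed

theorem mainTheorem1:
  fixes b1 b2 :: "real^'n"
  assumes "CARD('n) \<ge> 2"
    and "\<forall>i. 0 \<le> b1 $ i" and "\<forall>i. 0 \<le> b2 $ i"
    and "b1 \<noteq> b2" and "independent {b1, b2}"
    and "{i. b2 $ i \<noteq> 0} \<subseteq> {i. b1 $ i \<noteq> 0}"
  shows "infinite (minimal_cp_factorizations (outer b1 + outer b2))"
proof -
  note n1 = assms(2) and n2 = assms(3) and ne = assms(4) and ind = assms(5) and sub = assms(6)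
  define K where "K = (\<Sum>i\<in>UNIV. b2$i / b1$i)"
  have K0: "0 \<le> K" unfolding K_def using n1 n2 by (simp add: sum_nonneg)
  have Ki: "b2$i \<le> K * b1$i" for i
  proof (cases "b1$i = 0")
    case True then have "b2$i = 0" using sub by auto
    then show ?thesis using True by simp
  next
    case False
    then have pos: "b1$i > 0" using n1 by (metis order_le_less)
    have "b2$i / b1$i \<le> K" unfolding K_def
      by (rule member_le_sum) (use n1 n2 in auto)
    then show ?thesis using pos by (simp add: divide_le_eq)
  qed
  define c where "c s = sqrt (1 - s^2)" for s :: real
  define u where "u s = c s *\<^sub>R b1 - s *\<^sub>R b2" for s
  define v where "v s = s *\<^sub>R b1 + c s *\<^sub>R b2" for s
  define f where "f s = mset [u s, v s]" for s
  define S where "S = {0 .. 1/(2*(K+1))}"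
  have Sprops: "0 \<le> s \<and> s*(K+1) \<le> 1/2 \<and> s \<le> 1/2" if "s \<in> S" for s
  proof -
    have "0 \<le> s" "s \<le> 1/(2*(K+1))" using that by (auto simp: S_def)
    moreover have "s*(K+1) \<le> 1/2" using calculation K0 by (simp add: field_simps)
    moreover have "0 \<le> s*K" using calculation K0 by simp
    moreover have "s \<le> 1/2" using calculation by (simp add: algebra_simps)
    ultimately show ?thesis by simp
  qed
  have sq14: "s^2 \<le> 1/4" if "s \<in> S" for s
  proof -
    from Sprops[OF that] have "0 \<le> s" "s \<le> 1/2" by auto
    then have "s * s \<le> (1/2) * (1/2)" by (intro mult_mono) auto
    then show ?thesis by (simp add: power2_eq_square)
  qed
  have csq: "c s * c s = 1 - s * s" if "s \<in> S" for s
  proof -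
    have h: "0 \<le> 1 - s^2" using sq14[OF that] by simp
    have "(c s)^2 = 1 - s^2" unfolding c_def using h by simp
    then show ?thesis by (simp add: power2_eq_square)
  qed
  have chalf: "1/2 \<le> c s" if "s \<in> S" for s
    unfolding c_def
    by (rule real_le_rsqrt) (use sq14[OF that] in \<open>simp add: power2_eq_square\<close>)
  have uv_indep: "x = 0 \<and> y = 0" if s: "s \<in> S" and xy: "x *\<^sub>R u s + y *\<^sub>R v s = 0" for s x y
  proof -
    have "(x * c s + y * s) *\<^sub>R b1 + (y * c s - x * s) *\<^sub>R b2 = x *\<^sub>R u s + y *\<^sub>R v s"
      unfolding u_def v_def by (simp add: vec_eq_iff algebra_simps)
    then have "(x * c s + y * s) *\<^sub>R b1 + (y * c s - x * s) *\<^sub>R b2 = 0" using xy by simp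
    then have "x * c s + y * s = 0 \<and> y * c s - x * s = 0" by (rule indep2[OF ind ne])
    then have e: "x * c s + y * s = 0" "y * c s - x * s = 0" by auto
    have "x = x * (c s * c s + s * s)" using csq[OF s] by simp
    also have "\<dots> = c s * (x * c s + y * s) - s * (y * c s - x * s)" by (simp add: algebra_simps)
    finally have x: "x = 0" using e by simp
    have "y = y * (c s * c s + s * s)" using csq[OF s] by simp
    also have "\<dots> = s * (x * c s + y * s) + c s * (y * c s - x * s)" by (simp add: algebra_simps)
    finally have "y = 0" using e by simp
    with x show ?thesis by simp
  qed
  have rank: "cp_rank (outer b1 + outer b2) = 2" using cp_rank2[OF ind ne n1 n2] .
  have inS: "f s \<in> minimal_cp_factorizations (outer b1 + outer b2)" if s: "s \<in> S" for s
  proof -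
    have nn: "nonneg_cols [u s, v s]"
      unfolding nonneg_cols_def
    proof (intro ballI allI)
      fix b i assume "b \<in> set [u s, v s]"
      then consider "b = u s" | "b = v s" by auto
      then show "0 \<le> b $ i"
      proof cases
        case 1
        from Sprops[OF s] have sp: "0 \<le> s" "s*(K+1) \<le> 1/2" by auto
        have "s * b2$i \<le> s * (K * b1$i)" using Ki[of i] sp by (simp add: mult_left_mono)
        also have "\<dots> \<le> s*(K+1) * b1$i" using n1 sp by (simp add: algebra_simps)
        also have "\<dots> \<le> 1/2 * b1$i" using n1 sp(2) by (intro mult_right_mono) auto
        also have "\<dots> \<le> c s * b1$i" using n1 chalf[OF s] by (intro mult_right_mono) auto
        finally show ?thesis using 1 by (simp add: u_def)
      next
        case 2
        from Sprops[OF s] chalf[OF s] n1 n2 show ?thesis using 2 by (simp add: v_def)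
      qed
    qed
    have pl: "pairwise_lin_indep [u s, v s]"
    proof -
      have "u s \<noteq> v s \<and> independent {u s, v s}"
        by (rule indep2I) (rule uv_indep[OF s])
      then show ?thesis by (intro p2) auto
    qed
    have "BBt [u s, v s] = outer b1 + outer b2"
    proof -
      have "u s $ i * u s $ j + v s $ i * v s $ j = b1$i * b1$j + b2$i*b2$j" for i j
      proof -
        have "u s $ i * u s $ j + v s $ i * v s $ j = (c s * c s + s * s) * (b1$i * b1$j + b2$i*b2$j)"
          by (simp add: u_def v_def algebra_simps)
        then show ?thesis using csq[OF s] by simp
      qed
      then show ?thesis by (simp add: BBt_def outer_def vec_eq_iff)
    qed
    then have "minimal_cp_factorization (outer b1 + outer b2) [u s, v s]"
      using nn pl rank by (simp add: minimal_cp_factorization_def cp_factorization_def)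
    then show ?thesis unfolding minimal_cp_factorizations_def f_def
      by (intro image_eqI[where x="[u s, v s]"]) auto
  qed
  have inj: "inj_on f S"
  proof
    fix s t assume s: "s \<in> S" and t: "t \<in> S" and eq: "f s = f t"
    then have "mset [u s, v s] = mset [u t, v t]" by (simp add: f_def)
    then have "(u s = u t \<and> v s = v t) \<or> (u s = v t \<and> v s = u t)" by (rule m2)
    then consider "u s = u t" | "u s = v t" by blast
    then show "s = t"
    proof cases
      case 1
      have "(c s - c t) *\<^sub>R b1 + (t - s) *\<^sub>R b2 = u s - u t" unfolding u_def by (simp add: vec_eq_iff algebra_simps)
      then have "(c s - c t) *\<^sub>R b1 + (t - s) *\<^sub>R b2 = 0" using 1 by simp
      then have "c s - c t = 0 \<and> t - s = 0" by (rule indep2[OF ind ne])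
      then show ?thesis by simp
    next
      case 2
      have "(c s - t) *\<^sub>R b1 + (- s - c t) *\<^sub>R b2 = u s - v t" unfolding u_def v_def by (simp add: vec_eq_iff algebra_simps)
      then have "(c s - t) *\<^sub>R b1 + (- s - c t) *\<^sub>R b2 = 0" using 2 by simp
      then have "c s - t = 0 \<and> - s - c t = 0" by (rule indep2[OF ind ne])
      then have "- s - c t = 0" by simp
      then show ?thesis using Sprops[OF s] chalf[OF t] by simp
    qed
  qed
  have "infinite S" unfolding S_def using K0 by (simp add: infinite_Icc)
  then have "infinite (f ` S)" using inj by (simp add: finite_image_iff)
  moreover have "f ` S \<subseteq> minimal_cp_factorizations (outer b1 + outer b2)" using inS by blast
  ultimately show ?thesis by (metis finite_subset)
qed
end
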